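(* Let $\Sigma\subset\mathbb G$ be a regular surface and $\gamma=(\gamma_1,\gamma_2,\gamma_3):[a,b]\to\Sigma$ a Euclidean $C^2$-smooth regular curve, and let $t\in[a,b]$ be such that $\gamma(t)$ is a non-characteristic point of $\Sigma$, with $\bar p,\bar q$ evaluated at $\gamma(t)$. Write $\omega(\dot\gamma(t))=\frac{\dot\gamma_2}{\gamma_1}-\dot\gamma_3$. (i) If $\omega(\dot\gamma(t))\ne0$, then $k^{\infty,s}_{\gamma,\Sigma}=\lim_{L\to+\infty}k^{L,s}_{\gamma,\Sigma}$ exists and equals $\dfrac{\bar p\dot\gamma_1+\bar q\dot\gamma_2}{\gamma_1|\omega(\dot\gamma(t))|}$. (ii) If $\omega(\dot\gamma(t))=0$ and $\frac{d}{dt}\omega(\dot\gamma(t))=0$, then $k^{\infty,s}_{\gamma,\Sigma}=0$. (iii) If $\omega(\dot\gamma(t))=0$ and $\frac{d}{dt}\omega(\dot\gamma(t))\ne0$, then $$\lim_{L\to+\infty}\frac{k^{L,s}_{\gamma,\Sigma}}{\sqrt L}=\frac{\big(-\bar q\frac{\dot\gamma_1}{\gamma_1}+\bar p\dot\gamma_3\big)\frac{d}{dt}\omega(\dot\gamma(t))}{\big|\bar q\frac{\dot\gamma_1}{\gamma_1}-\bar p\dot\gamma_3\big|^3}.$$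
   Context: $\mathbb G=(0,\infty)\times\mathbb R^2$ is the affine group with coordinates $(x_1,x_2,x_3)$. Let $X_1=x_1\partial_{x_1}$, $X_2=x_1\partial_{x_2}+\partial_{x_3}$, $X_3=x_1\partial_{x_2}$ with dual forms $\omega_1=x_1^{-1}dx_1$, $\omega_2=dx_3$, $\omega=x_1^{-1}dx_2-dx_3$; for $L>0$, $g_L=\omega_1\otimes\omega_1+\omega_2\otimes\omega_2+L\,\omega\otimes\omega$ (so $X_1,X_2,\widetilde X_3:=L^{-1/2}X_3$ is orthonormal) with Levi-Civita connection $\nabla^L$. A regular surface is a Euclidean $C^2$-smooth compact oriented surface $\Sigma=\{u=0\}$ with $u$ Euclidean $C^2$ and nonvanishing Euclidean gradient. Put $p=X_1u$, $q=X_2u$, $r=\widetilde X_3u$, $l=\sqrt{p^2+q^2}$, $l_L=\sqrt{p^2+q^2+r^2}$, $\bar p=p/l$, $\bar q=q/l$, $\bar r_L=r/l_L$; non-characteristic means $l\neq0$. There $e_1=\bar qX_1-\bar pX_2$, $e_2=\bar r_L\bar pX_1+\bar r_L\bar qX_2-\frac l{l_L}\widetilde X_3$ is an orthonormal tangent frame of $\Sigma$, and $J_L:T\Sigma\to T\Sigma$ is the linear map with $J_L(e_1)=e_2$, $J_L(e_2)=-e_1$. $\nabla^{\Sigma,L}_UV$ is the $g_L$-orthogonal projection of $\nabla^L_UV$ onto $T\Sigma$. The signed geodesic curvature is $k^{L,s}_{\gamma,\Sigma}=\dfrac{\langle\nabla^{\Sigma,L}_{\dot\gamma}\dot\gamma,J_L(\dot\gamma)\rangle_L}{\|\dot\gamma\|_L^3}$,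 and $k^{\infty,s}_{\gamma,\Sigma}:=\lim_{L\to+\infty}k^{L,s}_{\gamma,\Sigma}$ when it exists. *)

theory Defs
  imports "HOL-Analysis.Analysis"
begin

(* Points of the affine group G = (0,oo) x R^2 are vectors x :: real^3 with
   coordinates x$1, x$2, x$3 and x$1 > 0.  Tangent vectors are written in the
   coordinate basis d/dx1, d/dx2, d/dx3. *)

definition AffG :: "(real^3) set" where
  "AffG = {x. 0 < x$1}"

definition X1 :: "real^3 \<Rightarrow> real^3" where "X1 x = vector [x$1, 0, 0]"
definition X2 :: "real^3 \<Rightarrow> real^3" where "X2 x = vector [0, x$1, 1]"
definition X3 :: "real^3 \<Rightarrow> real^3" where "X3 x = vector [0, x$1, 0]"
definition Xt3 :: "real \<Rightarrow> real^3 \<Rightarrow> real^3" where "Xt3 L x = (1 / sqrt L) *\<^sub>R X3 x"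

definition om1 :: "real^3 \<Rightarrow> real^3" where "om1 x = vector [1 / x$1, 0, 0]"
definition om2 :: "real^3 \<Rightarrow> real^3" where "om2 x = vector [0, 0, 1]"
definition om :: "real^3 \<Rightarrow> real^3" where "om x = vector [0, 1 / x$1, -1]"

definition omega :: "real^3 \<Rightarrow> real^3 \<Rightarrow> real" where
  "omega x v = om x \<bullet> v"

definition outer :: "real^3 \<Rightarrow> real^3^3" where
  "outer a = (\<chi> i j. a$i * a$j)"

definition gmat :: "real \<Rightarrow> real^3 \<Rightarrow> real^3^3" where
  "gmat L x = outer (om1 x) + outer (om2 x) + L *\<^sub>R outer (om x)"

definition gL :: "real \<Rightarrow> real^3 \<Rightarrow> real^3 \<Rightarrow> real^3 \<Rightarrow> real" where
  "gL L x v w = v \<bullet> (gmat L x *v w)"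

definition normL :: "real \<Rightarrow> real^3 \<Rightarrow> real^3 \<Rightarrow> real" where
  "normL L x v = sqrt (gL L x v v)"

definition dmetric :: "real \<Rightarrow> real^3 \<Rightarrow> 3 \<Rightarrow> real^3^3" where
  "dmetric L x l = (\<chi> i j. deriv (\<lambda>s. gmat L (x + s *\<^sub>R axis l 1) $ i $ j) 0)"

definition christoffel :: "real \<Rightarrow> real^3 \<Rightarrow> 3 \<Rightarrow> 3 \<Rightarrow> 3 \<Rightarrow> real" where
  "christoffel L x k i j = 1/2 * (\<Sum>l\<in>UNIV. matrix_inv (gmat L x) $ k $ l *
      (dmetric L x i $ j $ l + dmetric L x j $ i $ l - dmetric L x l $ i $ j))"

(* nabla^L_{dot gamma} dot gamma at a point x with velocity v and Euclidean acceleration a *)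
definition cov_acc :: "real \<Rightarrow> real^3 \<Rightarrow> real^3 \<Rightarrow> real^3 \<Rightarrow> real^3" where
  "cov_acc L x v a = (\<chi> k. a$k + (\<Sum>i\<in>UNIV. \<Sum>j\<in>UNIV. christoffel L x k i j * v$i * v$j))"

definition C2_on :: "(real^3) set \<Rightarrow> (real^3 \<Rightarrow> real) \<Rightarrow> bool" where
  "C2_on S f \<longleftrightarrow> (\<exists>f' f''.
      (\<forall>x\<in>S. (f has_derivative (\<lambda>h. f' x \<bullet> h)) (at x)) \<and>
      (\<forall>x\<in>S. (f' has_derivative (\<lambda>h. (f'' x :: real^3^3) *v h)) (at x)) \<and>
      continuous_on S f'')"

definition regular_surface :: "(real^3 \<Rightarrow> real) \<Rightarrow> (real^3) set \<Rightarrow> bool" where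
  "regular_surface u \<Sigma> \<longleftrightarrow> C2_on AffG u \<and> compact \<Sigma> \<and> \<Sigma> \<subseteq> AffG \<and>
      \<Sigma> = {x \<in> AffG. u x = 0} \<and>
      (\<forall>x\<in>\<Sigma>. frechet_derivative u (at x) \<noteq> (\<lambda>h. 0))"

definition C2_curve :: "(real \<Rightarrow> real^3) \<Rightarrow> real \<Rightarrow> real \<Rightarrow> bool" where
  "C2_curve \<gamma> a b \<longleftrightarrow> (\<exists>\<gamma>' \<gamma>''.
      (\<forall>s\<in>{a..b}. (\<gamma> has_vector_derivative \<gamma>' s) (at s within {a..b})) \<and>
      (\<forall>s\<in>{a..b}. (\<gamma>' has_vector_derivative \<gamma>'' s) (at s within {a..b})) \<and>
      continuous_on {a..b} \<gamma>'')"

definition regular_curve :: "(real \<Rightarrow> real^3) \<Rightarrow> real \<Rightarrow> real \<Rightarrow> bool" where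
  "regular_curve \<gamma> a b \<longleftrightarrow> C2_curve \<gamma> a b \<and>
      (\<forall>s\<in>{a..b}. vector_derivative \<gamma> (at s within {a..b}) \<noteq> 0)"

definition pu :: "(real^3 \<Rightarrow> real) \<Rightarrow> real^3 \<Rightarrow> real" where
  "pu u x = frechet_derivative u (at x) (X1 x)"
definition qu :: "(real^3 \<Rightarrow> real) \<Rightarrow> real^3 \<Rightarrow> real" where
  "qu u x = frechet_derivative u (at x) (X2 x)"
definition ru :: "real \<Rightarrow> (real^3 \<Rightarrow> real) \<Rightarrow> real^3 \<Rightarrow> real" where
  "ru L u x = frechet_derivative u (at x) (Xt3 L x)"
definition lu :: "(real^3 \<Rightarrow> real) \<Rightarrow> real^3 \<Rightarrow> real" where
  "lu u x = sqrt ((pu u x)\<^sup>2 + (qu u x)\<^sup>2)"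
definition lLu :: "real \<Rightarrow> (real^3 \<Rightarrow> real) \<Rightarrow> real^3 \<Rightarrow> real" where
  "lLu L u x = sqrt ((pu u x)\<^sup>2 + (qu u x)\<^sup>2 + (ru L u x)\<^sup>2)"
definition pbar :: "(real^3 \<Rightarrow> real) \<Rightarrow> real^3 \<Rightarrow> real" where
  "pbar u x = pu u x / lu u x"
definition qbar :: "(real^3 \<Rightarrow> real) \<Rightarrow> real^3 \<Rightarrow> real" where
  "qbar u x = qu u x / lu u x"
definition rbar :: "real \<Rightarrow> (real^3 \<Rightarrow> real) \<Rightarrow> real^3 \<Rightarrow> real" where
  "rbar L u x = ru L u x / lLu L u x"

definition noncharacteristic :: "(real^3 \<Rightarrow> real) \<Rightarrow> real^3 \<Rightarrow> bool" where
  "noncharacteristic u x \<longleftrightarrow> lu u x \<noteq> 0"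

(* orthonormal tangent frame e1, e2 of Sigma *)
definition e1 :: "(real^3 \<Rightarrow> real) \<Rightarrow> real^3 \<Rightarrow> real^3" where
  "e1 u x = qbar u x *\<^sub>R X1 x - pbar u x *\<^sub>R X2 x"
definition e2 :: "real \<Rightarrow> (real^3 \<Rightarrow> real) \<Rightarrow> real^3 \<Rightarrow> real^3" where
  "e2 L u x = (rbar L u x * pbar u x) *\<^sub>R X1 x + (rbar L u x * qbar u x) *\<^sub>R X2 x
              - (lu u x / lLu L u x) *\<^sub>R Xt3 L x"

definition projT :: "real \<Rightarrow> (real^3 \<Rightarrow> real) \<Rightarrow> real^3 \<Rightarrow> real^3 \<Rightarrow> real^3" where
  "projT L u x V = gL L x V (e1 u x) *\<^sub>R e1 u x + gL L x V (e2 L u x) *\<^sub>R e2 L u x"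

definition JL :: "real \<Rightarrow> (real^3 \<Rightarrow> real) \<Rightarrow> real^3 \<Rightarrow> real^3 \<Rightarrow> real^3" where
  "JL L u x v = gL L x v (e1 u x) *\<^sub>R e2 L u x - gL L x v (e2 L u x) *\<^sub>R e1 u x"

definition geod_curv_s :: "real \<Rightarrow> (real^3 \<Rightarrow> real) \<Rightarrow> (real \<Rightarrow> real^3) \<Rightarrow> real \<Rightarrow> real \<Rightarrow> real \<Rightarrow> real" where
  "geod_curv_s L u \<gamma> a b t =
     (let x = \<gamma> t;
          v = vector_derivative \<gamma> (at t within {a..b});
          acc = vector_derivative (\<lambda>s. vector_derivative \<gamma> (at s within {a..b})) (at t within {a..b})
      in gL L x (projT L u x (cov_acc L x v acc)) (JL L u x v) / (normL L x v) ^ 3)"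

end

theory Submission
  imports Defs "HOL-Real_Asymp.Real_Asymp"
begin


lemma gmat_entries:
  "gmat L x $1$1 = 1/(x$1)^2" "gmat L x $1$2 = 0" "gmat L x $1$3 = 0"
  "gmat L x $2$1 = 0" "gmat L x $2$2 = L/(x$1)^2" "gmat L x $2$3 = -L/(x$1)"
  "gmat L x $3$1 = 0" "gmat L x $3$2 = -L/(x$1)" "gmat L x $3$3 = 1 + L"
  by (simp_all add: gmat_def outer_def om1_def om2_def om_def power2_eq_square)

definition Ginv :: "real \<Rightarrow> real^3 \<Rightarrow> real^3^3" where
  "Ginv L x = vector [vector [(x$1)^2, 0, 0], vector [0, (x$1)^2*(1+L)/L, x$1], vector [0, x$1, 1]]"

lemma matrix_inv_eqI:
  fixes A B :: "real^'n^'n"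
  assumes "A ** B = mat 1" "B ** A = mat 1"
  shows "matrix_inv A = B"
proof -
  have ex: "\<exists>A'. A ** A' = mat 1 \<and> A' ** A = mat 1" using assms by blast
  define C where "C = matrix_inv A"
  have C: "A ** C = mat 1 \<and> C ** A = mat 1"
    unfolding C_def matrix_inv_def by (rule someI_ex[OF ex])
  have "C = C ** (A ** B)" using assms by (simp add: matrix_mul_rid)
  also have "\<dots> = (C ** A) ** B" by (simp add: matrix_mul_assoc)
  also have "\<dots> = B" using C by (simp add: matrix_mul_lid)
  finally show ?thesis unfolding C_def .
qed

lemma matrix_inv_gmat:
  assumes "x$1 \<noteq> 0" "L \<noteq> 0"
  shows "matrix_inv (gmat L x) = Ginv L x"
proof (rule matrix_inv_eqI)
  show "gmat L x ** Ginv L x = mat 1" "Ginv L x ** gmat L x = mat 1"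
    using assms
    by (simp_all add: vec_eq_iff forall_3 matrix_matrix_mult_def sum_3 mat_def gmat_entries Ginv_def
        field_simps power2_eq_square)
qed

lemma gmat_only_x1:
  assumes "y$1 = x$1" shows "gmat L y = gmat L x"
  using assms by (simp add: gmat_def om1_def om2_def om_def)

lemma dmetric_other:
  assumes "l \<noteq> 1" shows "dmetric L x l $ i $ j = 0"
proof -
  have "\<And>s. gmat L (x + s *\<^sub>R axis l 1) = gmat L x"
    using assms by (intro gmat_only_x1) (simp add: axis_def)
  then show ?thesis unfolding dmetric_def by simp
qed

lemma dmetric_1:
  assumes x: "x$1 \<noteq> 0"
  shows
  "dmetric L x 1 $1$1 = -2/(x$1)^3" "dmetric L x 1 $1$2 = 0" "dmetric L x 1 $1$3 = 0"
  "dmetric L x 1 $2$1 = 0" "dmetric L x 1 $2$2 = -2*L/(x$1)^3" "dmetric L x 1 $2$3 = L/(x$1)^2"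
  "dmetric L x 1 $3$1 = 0" "dmetric L x 1 $3$2 = L/(x$1)^2" "dmetric L x 1 $3$3 = 0"
proof -
  have e: "(x + s *\<^sub>R axis 1 1) $ 1 = x$1 + s" for s by (simp add: axis_def)
  have d1: "deriv (\<lambda>s. 1/(x$1+s)^2) 0 = -2/(x$1)^3"
    by (rule DERIV_imp_deriv) (use x in \<open>auto intro!: derivative_eq_intros simp: field_simps power2_eq_square power3_eq_cube\<close>)
  have d2: "deriv (\<lambda>s. L/(x$1+s)^2) 0 = -2*L/(x$1)^3"
    by (rule DERIV_imp_deriv) (use x in \<open>auto intro!: derivative_eq_intros simp: field_simps power2_eq_square power3_eq_cube\<close>)
  have d3: "deriv (\<lambda>s. -(L/(x$1+s))) 0 = L/(x$1)^2"
    by (rule DERIV_imp_deriv) (use x in \<open>auto intro!: derivative_eq_intros simp: field_simps power2_eq_square power3_eq_cube\<close>)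
  show
  "dmetric L x 1 $1$1 = -2/(x$1)^3" "dmetric L x 1 $1$2 = 0" "dmetric L x 1 $1$3 = 0"
  "dmetric L x 1 $2$1 = 0" "dmetric L x 1 $2$2 = -2*L/(x$1)^3" "dmetric L x 1 $2$3 = L/(x$1)^2"
  "dmetric L x 1 $3$1 = 0" "dmetric L x 1 $3$2 = L/(x$1)^2" "dmetric L x 1 $3$3 = 0"
    unfolding dmetric_def by (simp_all add: gmat_entries e d1 d2 d3)
qed


lemma cov_acc_frame:
  assumes x: "x$1 \<noteq> 0" and L: "L \<noteq> 0"
  shows "cov_acc L x v a $1 / x$1 = a$1/x$1 - (v$1/x$1)^2 + L*(v$2/x$1 - v$3)*(v$2/x$1)"
    "cov_acc L x v a $3 = a$3 - L*(v$1/x$1)*(v$2/x$1 - v$3)"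
    "cov_acc L x v a $2 / x$1 - cov_acc L x v a $3 = a$2/x$1 - a$3 - (v$1/x$1)*(2*(v$2/x$1 - v$3) + v$3)"
  using x L
  by (simp_all add: cov_acc_def christoffel_def sum_3 matrix_inv_gmat Ginv_def dmetric_other dmetric_1
      field_simps power2_eq_square power3_eq_cube)


lemma gL_formula:
  assumes "x$1 \<noteq> 0"
  shows "gL L x V W = (V$1/x$1)*(W$1/x$1) + V$3*W$3 + L*(V$2/x$1 - V$3)*(W$2/x$1 - W$3)"
  using assms
  by (simp add: gL_def gmat_def outer_def inner_vec_def matrix_vector_mult_def sum_3 om1_def om2_def om_def
      field_simps power2_eq_square)

lemma gL_left: "x$1 \<noteq> 0 \<Longrightarrow> gL L x (a *\<^sub>R V + b *\<^sub>R W) Z = a * gL L x V Z + b * gL L x W Z"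
  by (simp add: gL_formula algebra_simps add_divide_distrib diff_divide_distrib)

lemma gL_right: "x$1 \<noteq> 0 \<Longrightarrow> gL L x Z (a *\<^sub>R V - b *\<^sub>R W) = a * gL L x Z V - b * gL L x Z W"
  by (simp add: gL_formula algebra_simps add_divide_distrib diff_divide_distrib)

lemma gL_sym: "x$1 \<noteq> 0 \<Longrightarrow> gL L x V W = gL L x W V"
  by (simp add: gL_formula algebra_simps)

lemma gL_e1:
  assumes "x$1 \<noteq> 0"
  shows "gL L x V (e1 u x) = (V$1/x$1)*qbar u x - V$3*pbar u x"
  using assms by (simp add: gL_formula e1_def X1_def X2_def)

lemma gL_e2:
  assumes x: "x$1 \<noteq> 0"
  shows "gL L x V (e2 L u x) = rbar L u x * (pbar u x*(V$1/x$1) + qbar u x*V$3)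
           - L*(V$2/x$1 - V$3)*(lu u x / lLu L u x / sqrt L)"
proof -
  define K where "K = lu u x / lLu L u x / sqrt L"
  have c: "e2 L u x $ 1 = rbar L u x * pbar u x * x$1" "e2 L u x $ 2 = rbar L u x * qbar u x * x$1 - K * x$1"
     "e2 L u x $ 3 = rbar L u x * qbar u x"
    by (simp_all add: K_def e2_def X1_def X2_def Xt3_def X3_def)
  have "(rbar L u x * qbar u x * x$1 - K * x$1) / x$1 - rbar L u x * qbar u x = - K"
    using x by (simp add: field_simps)
  then show ?thesis unfolding K_def[symmetric] gL_formula[OF x] c
    using x by (simp add: field_simps)
qed

definition Kf :: "real \<Rightarrow> real \<Rightarrow> real \<Rightarrow> real \<Rightarrow> real \<Rightarrow> real \<Rightarrow> real \<Rightarrow> real \<Rightarrow> real \<Rightarrow> real \<Rightarrow> real \<Rightarrow> real" where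
  "Kf pb qb R l \<alpha> \<beta> c A0 B0 C L =
    ((R*(pb*(A0 + L*c*(c+\<beta>))+qb*(B0 - L*\<alpha>*c)) - L*l*C)*(qb*\<alpha>-pb*\<beta>)/sqrt(L*l^2+R^2)
      + (qb*(A0 + L*c*(c+\<beta>))-pb*(B0 - L*\<alpha>*c))*c* sqrt(L*l^2+R^2)/l) / sqrt(\<alpha>^2+\<beta>^2+L*c^2)^3"

definition Ff :: "real \<Rightarrow> real \<Rightarrow> real \<Rightarrow> real \<Rightarrow> real \<Rightarrow> real \<Rightarrow> real \<Rightarrow> real \<Rightarrow> real \<Rightarrow> real \<Rightarrow> real \<Rightarrow> real" where
  "Ff pb qb R l \<alpha> \<beta> c A0 B0 C h =
    ((R*(pb*(A0*h^2 + c*(c+\<beta>))+qb*(B0*h^2 - \<alpha>*c)) - l*C)*(qb*\<alpha>-pb*\<beta>)*h^2/sqrt(l^2+R^2*h^2)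
      + (qb*(A0*h^2 + c*(c+\<beta>))-pb*(B0*h^2 - \<alpha>*c))*c* sqrt(l^2+R^2*h^2)/l) / sqrt((\<alpha>^2+\<beta>^2)*h^2+c^2)^3"

lemma sqrt_mult_sq: "s > 0 \<Longrightarrow> sqrt (s^2 * X) = s * sqrt X"
  by (simp add: real_sqrt_mult)

lemma Kf_Ff_alg:
  fixes s mm dd :: real
  assumes s: "s > 0" and l: "l > 0" and mm: "mm > 0"
  shows "((R*(pb*(A0 + s^2*c*(c+\<beta>))+qb*(B0 - s^2*\<alpha>*c)) - s^2*l*C)*(qb*\<alpha>-pb*\<beta>)/(s*mm)
      + (qb*(A0 + s^2*c*(c+\<beta>))-pb*(B0 - s^2*\<alpha>*c))*c*(s*mm)/l) / (s*dd)^3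
    = ((R*(pb*(A0*(1/s)^2 + c*(c+\<beta>))+qb*(B0*(1/s)^2 - \<alpha>*c)) - l*C)*(qb*\<alpha>-pb*\<beta>)*(1/s)^2/mm
      + (qb*(A0*(1/s)^2 + c*(c+\<beta>))-pb*(B0*(1/s)^2 - \<alpha>*c))*c*mm/l) / dd^3"
proof -
  define X where "X = (R*(pb*(A0*(1/s)^2 + c*(c+\<beta>))+qb*(B0*(1/s)^2 - \<alpha>*c)) - l*C)"
  define Y where "Y = (qb*(A0*(1/s)^2 + c*(c+\<beta>))-pb*(B0*(1/s)^2 - \<alpha>*c))"
  have X: "(R*(pb*(A0 + s^2*c*(c+\<beta>))+qb*(B0 - s^2*\<alpha>*c)) - s^2*l*C) = s^2 * X"
    unfolding X_def using s by (simp add: field_simps power2_eq_square)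
  have Y: "(qb*(A0 + s^2*c*(c+\<beta>))-pb*(B0 - s^2*\<alpha>*c)) = s^2 * Y"
    unfolding Y_def using s by (simp add: field_simps power2_eq_square)
  have gen: "(s^2*X*Z/(s*mm) + s^2*Y*c*(s*mm)/l) / (s*dd)^3 = (X*Z*(1/s)^2/mm + Y*c*mm/l)/dd^3" for Z
  proof (cases "dd = 0")
    case True then show ?thesis by simp
  next
    case False
    then show ?thesis using s l mm by (simp add: field_simps power2_eq_square power3_eq_cube)
  qed
  show ?thesis unfolding X Y X_def[symmetric] Y_def[symmetric] using gen[of "qb*\<alpha>-pb*\<beta>"]
    by (simp add: mult.assoc)
qed

lemma Kf_Ff:
  assumes L: "L > 0" and l: "l > 0"
  shows "Kf pb qb R l \<alpha> \<beta> c A0 B0 C L = Ff pb qb R l \<alpha> \<beta> c A0 B0 C (1/sqrt L)"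
proof -
  define s where "s = sqrt L"
  have s: "s > 0" "L = s^2" using L by (auto simp: s_def)
  have m: "sqrt(L*l^2+R^2) = s * sqrt(l^2+R^2*(1/s)^2)"
    using s by (simp add: sqrt_mult_sq[symmetric] field_simps)
  have d: "sqrt(\<alpha>^2+\<beta>^2+L*c^2) = s * sqrt((\<alpha>^2+\<beta>^2)*(1/s)^2+c^2)"
    using s by (simp add: sqrt_mult_sq[symmetric] field_simps)
  have mp: "sqrt(l^2+R^2*(1/s)^2) > 0" using l s by (intro real_sqrt_gt_zero) (simp add: add_pos_nonneg)
  show ?thesis
    unfolding Kf_def Ff_def s_def[symmetric] m d
    unfolding \<open>L = s^2\<close>
    by (rule Kf_Ff_alg[OF s(1) l mp])
qed

lemma inv_sqrt_tendsto: "((\<lambda>L::real. 1/sqrt L) \<longlongrightarrow> 0) at_top"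
  by real_asymp

lemma lim_via_Ff:
  assumes l: "l > 0" and cont: "isCont (Ff pb qb R l \<alpha> \<beta> c A0 B0 C) 0"
  shows "((\<lambda>L. Kf pb qb R l \<alpha> \<beta> c A0 B0 C L) \<longlongrightarrow> Ff pb qb R l \<alpha> \<beta> c A0 B0 C 0) at_top"
proof -
  have "((\<lambda>L. Ff pb qb R l \<alpha> \<beta> c A0 B0 C (1/sqrt L)) \<longlongrightarrow> Ff pb qb R l \<alpha> \<beta> c A0 B0 C 0) at_top"
    by (rule isCont_tendsto_compose[OF cont inv_sqrt_tendsto])
  moreover have "eventually (\<lambda>L. Ff pb qb R l \<alpha> \<beta> c A0 B0 C (1/sqrt L) = Kf pb qb R l \<alpha> \<beta> c A0 B0 C L) at_top"
    using eventually_gt_at_top[of 0] by eventually_elim (simp add: Kf_Ff l)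
  ultimately show ?thesis by (rule Lim_transform_eventually)
qed

lemma lim_i:
  assumes l: "l > 0" and c: "c \<noteq> 0"
  shows "((\<lambda>L. Kf pb qb R l \<alpha> \<beta> c A0 B0 C L) \<longlongrightarrow> (pb*\<alpha> + qb*(c+\<beta>))/\<bar>c\<bar>) at_top"
proof -
  have cont: "isCont (Ff pb qb R l \<alpha> \<beta> c A0 B0 C) 0"
    unfolding Ff_def using l c by (intro continuous_intros) auto
  have "Ff pb qb R l \<alpha> \<beta> c A0 B0 C 0 = (pb*\<alpha> + qb*(c+\<beta>))/\<bar>c\<bar>"
  proof -
    have "Ff pb qb R l \<alpha> \<beta> c A0 B0 C 0 = (qb*(c*(c+\<beta>)) + pb*(\<alpha>*c))*c / \<bar>c\<bar>^3"
      using l by (simp add: Ff_def)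
    also have "\<dots> = (pb*\<alpha> + qb*(c+\<beta>)) * (c*c) / (\<bar>c\<bar>*\<bar>c\<bar>*\<bar>c\<bar>)"
      by (simp add: power3_eq_cube algebra_simps)
    also have "\<dots> = (pb*\<alpha> + qb*(c+\<beta>))/\<bar>c\<bar>"
      using c by (simp add: abs_mult_self_eq)
    finally show ?thesis .
  qed
  with lim_via_Ff[OF l cont] show ?thesis by simp
qed


definition Gf :: "real \<Rightarrow> real \<Rightarrow> real \<Rightarrow> real \<Rightarrow> real \<Rightarrow> real \<Rightarrow> real \<Rightarrow> real \<Rightarrow> real \<Rightarrow> real \<Rightarrow> real" where
  "Gf pb qb R l \<alpha> \<beta> A0 B0 C h =
    (R*(pb*A0+qb*B0)*h^2 - l*C)*(qb*\<alpha>-pb*\<beta>)/sqrt(l^2+R^2*h^2) / sqrt(\<alpha>^2+\<beta>^2)^3"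

definition Hf :: "real \<Rightarrow> real \<Rightarrow> real \<Rightarrow> real \<Rightarrow> real \<Rightarrow> real \<Rightarrow> real \<Rightarrow> real \<Rightarrow> real \<Rightarrow> real" where
  "Hf pb qb R l \<alpha> \<beta> A0 B0 h =
    R*(pb*A0+qb*B0)*(qb*\<alpha>-pb*\<beta>)*h/sqrt(l^2+R^2*h^2) / sqrt(\<alpha>^2+\<beta>^2)^3"

lemma Kf0_Gf:
  assumes L: "L > 0" and l: "l > 0"
  shows "Kf pb qb R l \<alpha> \<beta> 0 A0 B0 C L / sqrt L = Gf pb qb R l \<alpha> \<beta> A0 B0 C (1/sqrt L)"
proof -
  define s where "s = sqrt L"
  have s: "s > 0" "L = s^2" using L by (auto simp: s_def)
  have m: "sqrt(L*l^2+R^2) = s * sqrt(l^2+R^2*(1/s)^2)"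
    using s by (simp add: sqrt_mult_sq[symmetric] field_simps)
  define mm where "mm = sqrt(l^2+R^2*(1/s)^2)"
  have mp: "mm > 0" unfolding mm_def using l s by (intro real_sqrt_gt_zero) (simp add: add_pos_nonneg)
  define E where "E = sqrt(\<alpha>^2+\<beta>^2)^3"
  have e: "sqrt(\<alpha>^2+\<beta>^2+L*0^2)^3 = E" unfolding E_def by simp
  have "(R*(pb*A0+qb*B0) - s^2*l*C)/(s*mm)/s = (R*(pb*A0+qb*B0)*(1/s)^2 - l*C)/mm"
    using s mp by (simp add: field_simps power2_eq_square)
  then have "(R*(pb*A0+qb*B0) - s^2*l*C)*K/(s*mm)/E/s = (R*(pb*A0+qb*B0)*(1/s)^2 - l*C)*K/mm/E" for K
    by (metis (no_types, lifting) divide_divide_eq_left' times_divide_eq_left mult.commute)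
  then show ?thesis
    unfolding Kf_def Gf_def s_def[symmetric] m mm_def[symmetric] e E_def[symmetric]
    unfolding \<open>L = s^2\<close> by simp
qed

lemma Kf0_Hf:
  assumes L: "L > 0" and l: "l > 0"
  shows "Kf pb qb R l \<alpha> \<beta> 0 A0 B0 0 L = Hf pb qb R l \<alpha> \<beta> A0 B0 (1/sqrt L)"
proof -
  define s where "s = sqrt L"
  have s: "s > 0" "L = s^2" using L by (auto simp: s_def)
  have m: "sqrt(L*l^2+R^2) = s * sqrt(l^2+R^2*(1/s)^2)"
    using s by (simp add: sqrt_mult_sq[symmetric] field_simps)
  define mm where "mm = sqrt(l^2+R^2*(1/s)^2)"
  have mp: "mm > 0" unfolding mm_def using l s by (intro real_sqrt_gt_zero) (simp add: add_pos_nonneg)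
  define E where "E = sqrt(\<alpha>^2+\<beta>^2)^3"
  have e: "sqrt(\<alpha>^2+\<beta>^2+L*0^2)^3 = E" unfolding E_def by simp
  show ?thesis
    unfolding Kf_def Hf_def s_def[symmetric] m mm_def[symmetric] e E_def[symmetric]
    using s mp by simp
qed

lemma lim_iii:
  assumes l: "l > 0"
  shows "((\<lambda>L. Kf pb qb R l \<alpha> \<beta> 0 A0 B0 C L / sqrt L) \<longlongrightarrow> - C*(qb*\<alpha>-pb*\<beta>)/sqrt(\<alpha>^2+\<beta>^2)^3) at_top"
proof -
  have cont: "isCont (Gf pb qb R l \<alpha> \<beta> A0 B0 C) 0"
  proof (cases "sqrt(\<alpha>^2+\<beta>^2)^3 = 0")
    case True then show ?thesis unfolding Gf_def by simp
  next
    case False then show ?thesis unfolding Gf_def using l by (intro continuous_intros) auto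
  qed
  have v: "Gf pb qb R l \<alpha> \<beta> A0 B0 C 0 = - C*(qb*\<alpha>-pb*\<beta>)/sqrt(\<alpha>^2+\<beta>^2)^3"
    using l by (simp add: Gf_def)
  have "((\<lambda>L. Gf pb qb R l \<alpha> \<beta> A0 B0 C (1/sqrt L)) \<longlongrightarrow> Gf pb qb R l \<alpha> \<beta> A0 B0 C 0) at_top"
    by (rule isCont_tendsto_compose[OF cont inv_sqrt_tendsto])
  moreover have "eventually (\<lambda>L. Gf pb qb R l \<alpha> \<beta> A0 B0 C (1/sqrt L) = Kf pb qb R l \<alpha> \<beta> 0 A0 B0 C L / sqrt L) at_top"
    using eventually_gt_at_top[of 0] by eventually_elim (simp add: Kf0_Gf l)
  ultimately show ?thesis unfolding v by (rule Lim_transform_eventually)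
qed

lemma lim_ii:
  assumes l: "l > 0"
  shows "((\<lambda>L. Kf pb qb R l \<alpha> \<beta> 0 A0 B0 0 L) \<longlongrightarrow> 0) at_top"
proof -
  have cont: "isCont (Hf pb qb R l \<alpha> \<beta> A0 B0) 0"
  proof (cases "sqrt(\<alpha>^2+\<beta>^2)^3 = 0")
    case True then show ?thesis unfolding Hf_def by simp
  next
    case False then show ?thesis unfolding Hf_def using l by (intro continuous_intros) auto
  qed
  have v: "Hf pb qb R l \<alpha> \<beta> A0 B0 0 = 0"
    by (simp add: Hf_def)
  have "((\<lambda>L. Hf pb qb R l \<alpha> \<beta> A0 B0 (1/sqrt L)) \<longlongrightarrow> Hf pb qb R l \<alpha> \<beta> A0 B0 0) at_top"
    by (rule isCont_tendsto_compose[OF cont inv_sqrt_tendsto])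
  moreover have "eventually (\<lambda>L. Hf pb qb R l \<alpha> \<beta> A0 B0 (1/sqrt L) = Kf pb qb R l \<alpha> \<beta> 0 A0 B0 0 L) at_top"
    using eventually_gt_at_top[of 0] by eventually_elim (simp add: Kf0_Hf l)
  ultimately show ?thesis unfolding v by (rule Lim_transform_eventually)
qed


lemma real_core:
  fixes p q R L l lL r rb K pb qb A B Cc \<alpha> \<beta> c :: real
  assumes L: "L > 0" and l: "l = sqrt (p^2+q^2)" "l \<noteq> 0"
    and r: "r = R / sqrt L" and lL: "lL = sqrt (p^2+q^2+r^2)"
    and pb: "pb = p/l" and qb: "qb = q/l" and rb: "rb = r/lL" and K: "K = l/lL/sqrt L"
    and tang: "p*\<alpha> + q*\<beta> + R*c = 0"
  shows "(rb*(pb*A+qb*B) - L*Cc*K)*(qb*\<alpha>-pb*\<beta>) - (qb*A-pb*B)*(rb*(pb*\<alpha>+qb*\<beta>) - L*c*K)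
       = (R*(pb*A+qb*B) - L*l*Cc)*(qb*\<alpha>-pb*\<beta>)/sqrt(L*l^2+R^2) + (qb*A-pb*B)*c* sqrt(L*l^2+R^2)/l"
proof -
  define M where "M = sqrt(L*l^2+R^2)"
  have "l \<ge> 0" using l(1) by simp
  then have lpos: "l > 0" using l(2) by linarith
  have Mpos: "M > 0" unfolding M_def using L lpos by (intro real_sqrt_gt_zero add_pos_nonneg) auto
  have M2: "M^2 = L*l^2+R^2" unfolding M_def using L by (simp add: add_nonneg_nonneg)
  have sL: "sqrt L > 0" using L by simp
  have l2: "l^2 = p^2+q^2" using l by simp
  have "p^2+q^2+r^2 = (M / sqrt L)^2"
    using L by (simp add: r M2 l2 power_divide field_simps)
  then have lL': "lL = M / sqrt L" using lL Mpos sL by simp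
  have rb': "rb = R / M" using rb r lL' sL Mpos by simp
  have K': "K = l / M" using K lL' sL Mpos by simp
  have pq: "pb*\<alpha>+qb*\<beta> = - R*c/l" using tang pb qb l by (simp add: field_simps)
  have sec: "rb*(pb*\<alpha>+qb*\<beta>) - L*c*K = - c*M/l"
  proof -
    have "rb*(pb*\<alpha>+qb*\<beta>) - L*c*K = - c*(L*l^2+R^2)/(l*M)"
      unfolding rb' K' pq using lpos Mpos by (simp add: field_simps power2_eq_square)
    also have "\<dots> = - c*M/l" unfolding M2[symmetric] using lpos Mpos by (simp add: power2_eq_square)
    finally show ?thesis .
  qed
  have fir: "rb*(pb*A+qb*B) - L*Cc*K = (R*(pb*A+qb*B) - L*l*Cc)/M"
    unfolding rb' K' using Mpos by (simp add: field_simps)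
  show ?thesis unfolding sec fir M_def[symmetric] using Mpos lpos by (simp add: field_simps)
qed


lemma curv_formula:
  assumes x: "x$1 > 0" and L: "L > 0"
    and G: "frechet_derivative u (at x) = (\<lambda>h. G \<bullet> h)"
    and tang: "G \<bullet> v = 0"
    and nc: "lu u x \<noteq> 0"
  shows "gL L x (projT L u x (cov_acc L x v acc)) (JL L u x v) / normL L x v ^ 3 =
     Kf (pbar u x) (qbar u x) (G$2*x$1) (lu u x) (v$1/x$1) (v$3) (v$2/x$1 - v$3)
        (acc$1/x$1 - (v$1/x$1)^2) (acc$3) (acc$2/x$1 - acc$3 - (v$1/x$1)*(2*(v$2/x$1 - v$3) + v$3)) L"
proof -
  have x0: "x$1 \<noteq> 0" using x by simp
  have L0: "L \<noteq> 0" using L by simp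
  define p where "p = pu u x"
  define q where "q = qu u x"
  define r where "r = ru L u x"
  define R where "R = G$2*x$1"
  define l where "l = lu u x"
  define lL where "lL = lLu L u x"
  define pb where "pb = pbar u x"
  define qb where "qb = qbar u x"
  define rb where "rb = rbar L u x"
  define K where "K = l / lL / sqrt L"
  define \<alpha> where "\<alpha> = v$1/x$1"
  define \<beta> where "\<beta> = v$3"
  define c where "c = v$2/x$1 - v$3"
  define ca where "ca = cov_acc L x v acc"
  have p: "p = G$1*x$1" unfolding p_def pu_def G X1_def by (simp add: inner_vec_def sum_3)
  have q: "q = G$2*x$1 + G$3" unfolding q_def qu_def G X2_def by (simp add: inner_vec_def sum_3)
  have r: "r = R / sqrt L" unfolding r_def R_def ru_def G Xt3_def X3_def by (simp add: inner_vec_def sum_3)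
  have tang': "p*\<alpha> + q*\<beta> + R*c = 0"
  proof -
    have "p*\<alpha> + q*\<beta> + R*c = G \<bullet> v"
      unfolding p q R_def \<alpha>_def \<beta>_def c_def using x0 by (simp add: inner_vec_def sum_3 field_simps)
    then show ?thesis using tang by simp
  qed
  have l: "l = sqrt (p^2+q^2)" unfolding l_def lu_def p_def q_def ..
  have lL: "lL = sqrt (p^2+q^2+r^2)" unfolding lL_def lLu_def p_def q_def r_def ..
  have pb: "pb = p/l" unfolding pb_def pbar_def p_def l_def ..
  have qb: "qb = q/l" unfolding qb_def qbar_def q_def l_def ..
  have rb: "rb = r/lL" unfolding rb_def rbar_def r_def lL_def ..
  have l0: "l \<noteq> 0" using nc l_def by simp
  have l2: "l^2 = p^2+q^2" using l by simp
  have lL0: "lL \<noteq> 0" using lL l0 l2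
    by (metis add_nonneg_nonneg power2_less_eq_zero_iff real_sqrt_eq_zero_cancel_iff zero_le_power2 not_le
        add_nonneg_eq_0_iff)
  have lL2: "lL^2 = l^2 + r^2" using lL l2 by simp
  have ge1: "gL L x V (e1 u x) = (V$1/x$1)*qb - V$3*pb" for V
    unfolding qb_def pb_def by (rule gL_e1[OF x0])
  have ge2: "gL L x V (e2 L u x) = rb * (pb*(V$1/x$1) + qb*V$3) - L*(V$2/x$1 - V$3)*K" for V
    unfolding K_def rb_def pb_def qb_def l_def lL_def by (rule gL_e2[OF x0])
  have e1c: "e1 u x $1 / x$1 = qb" "e1 u x $3 = - pb" "e1 u x $2 / x$1 = - pb"
    using x0 by (simp_all add: e1_def X1_def X2_def qb_def pb_def)
  have e2c: "e2 L u x $1 / x$1 = rb*pb" "e2 L u x $3 = rb*qb" "e2 L u x $2 / x$1 = rb*qb - K"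
    using x0 by (simp_all add: e2_def X1_def X2_def Xt3_def X3_def rb_def pb_def qb_def K_def l_def lL_def field_simps)
  have pq1: "pb^2 + qb^2 = 1"
  proof -
    have "pb^2 + qb^2 = (p^2+q^2)/l^2" by (simp add: pb qb power_divide add_divide_distrib)
    also have "\<dots> = l^2/l^2" using l2 by simp
    also have "\<dots> = 1" using l0 by simp
    finally show ?thesis .
  qed
  have g11: "gL L x (e1 u x) (e1 u x) = 1"
    unfolding ge1 e1c using pq1 by (simp add: power2_eq_square)
  have g12: "gL L x (e1 u x) (e2 L u x) = 0"
    unfolding ge2 e1c by (simp add: algebra_simps)
  have g21: "gL L x (e2 L u x) (e1 u x) = 0"
    using g12 gL_sym[OF x0] by metis
  have g22: "gL L x (e2 L u x) (e2 L u x) = 1"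
  proof -
    have "gL L x (e2 L u x) (e2 L u x) = rb^2*(pb^2+qb^2) + L*K^2"
      unfolding ge2 e2c by (simp add: algebra_simps power2_eq_square)
    also have "\<dots> = (r^2 + l^2)/lL^2"
      using pq1 L lL0 by (simp add: rb K_def power_divide field_simps)
    also have "\<dots> = lL^2/lL^2" using lL2 by (simp add: add.commute)
    also have "\<dots> = 1" using lL0 by simp
    finally show ?thesis .
  qed
  have num: "gL L x (projT L u x ca) (JL L u x v)
      = gL L x ca (e2 L u x) * gL L x v (e1 u x) - gL L x ca (e1 u x) * gL L x v (e2 L u x)"
    unfolding projT_def JL_def gL_right[OF x0] gL_left[OF x0] g11 g12 g21 g22 by simp
  have nv: "normL L x v = sqrt (\<alpha>^2+\<beta>^2+L*c^2)"
    unfolding normL_def gL_formula[OF x0] \<alpha>_def \<beta>_def c_def by (simp add: power2_eq_square mult.assoc)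
  have caf1: "ca$1/x$1 = (acc$1/x$1 - \<alpha>^2) + L*c*(c+\<beta>)"
    using cov_acc_frame(1)[OF x0 L0, of v acc] unfolding ca_def \<alpha>_def \<beta>_def c_def by (simp add: algebra_simps)
  have caf2: "ca$3 = acc$3 - L*\<alpha>*c"
    using cov_acc_frame(2)[OF x0 L0, of v acc] unfolding ca_def \<alpha>_def \<beta>_def c_def by (simp add: algebra_simps)
  have caf3: "ca$2/x$1 - ca$3 = acc$2/x$1 - acc$3 - \<alpha>*(2*c + \<beta>)"
    using cov_acc_frame(3)[OF x0 L0, of v acc] unfolding ca_def \<alpha>_def \<beta>_def c_def by (simp add: algebra_simps)
  note caf = caf1 caf3 caf2
  have core: "(rb*(pb*(ca$1/x$1)+qb*(ca$3)) - L*(ca$2/x$1 - ca$3)*K)*(qb*\<alpha>-pb*\<beta>)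
      - (qb*(ca$1/x$1)-pb*(ca$3))*(rb*(pb*\<alpha>+qb*\<beta>) - L*c*K)
     = (R*(pb*(ca$1/x$1)+qb*(ca$3)) - L*l*(ca$2/x$1 - ca$3))*(qb*\<alpha>-pb*\<beta>)/sqrt(L*l^2+R^2)
        + (qb*(ca$1/x$1)-pb*(ca$3))*c* sqrt(L*l^2+R^2)/l"
    by (rule real_core[OF L l l0 r lL pb qb rb K_def tang'])
  have lhs: "gL L x ca (e2 L u x) * gL L x v (e1 u x) - gL L x ca (e1 u x) * gL L x v (e2 L u x)
     = (rb*(pb*(ca$1/x$1)+qb*(ca$3)) - L*(ca$2/x$1 - ca$3)*K)*(qb*\<alpha>-pb*\<beta>)
      - (qb*(ca$1/x$1)-pb*(ca$3))*(rb*(pb*\<alpha>+qb*\<beta>) - L*c*K)"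
    unfolding ge1 ge2 \<alpha>_def \<beta>_def c_def by (simp add: algebra_simps)
  have "gL L x (projT L u x ca) (JL L u x v) / normL L x v ^ 3 =
     Kf pb qb R l \<alpha> \<beta> c (acc$1/x$1 - \<alpha>^2) (acc$3) (acc$2/x$1 - acc$3 - \<alpha>*(2*c + \<beta>)) L"
    unfolding num nv lhs core Kf_def caf3[symmetric] caf1[symmetric] caf2[symmetric] ..
  then show ?thesis unfolding \<alpha>_def \<beta>_def c_def pb_def qb_def R_def l_def ca_def .
qed



lemma vd_comp:
  assumes "(f has_vector_derivative f') (at t within S)"
  shows "((\<lambda>s. f s $ i) has_real_derivative f' $ i) (at t within S)"
proof -
  have "((\<lambda>s. f s $ i) has_derivative (\<lambda>h. (h *\<^sub>R f') $ i)) (at t within S)"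
    using bounded_linear.has_derivative[OF bounded_linear_vec_nth assms[unfolded has_vector_derivative_def]] .
  moreover have "(\<lambda>h. (h *\<^sub>R f') $ i) = (*) (f' $ i)" by (auto simp: mult.commute)
  ultimately show ?thesis unfolding has_field_derivative_def by simp
qed

lemma point_facts:
  assumes x: "x$1 > 0"
    and G: "frechet_derivative u (at x) = (\<lambda>h. G \<bullet> h)"
    and tang: "G \<bullet> v = 0"
    and nc: "lu u x \<noteq> 0"
  shows "pbar u x ^2 + qbar u x ^2 = 1"
    "pbar u x * (v$1/x$1) + qbar u x * v$3 + (G$2*x$1)/lu u x * (v$2/x$1 - v$3) = 0"
    "lu u x > 0"
proof -
  have x0: "x$1 \<noteq> 0" using x by simp
  define p where "p = pu u x"
  define q where "q = qu u x"
  define l where "l = lu u x"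
  have p: "p = G$1*x$1" unfolding p_def pu_def G X1_def by (simp add: inner_vec_def sum_3)
  have q: "q = G$2*x$1 + G$3" unfolding q_def qu_def G X2_def by (simp add: inner_vec_def sum_3)
  have l: "l = sqrt (p^2+q^2)" unfolding l_def lu_def p_def q_def ..
  have l0: "l \<noteq> 0" using nc l_def by simp
  have "l \<ge> 0" using l by simp
  then show "lu u x > 0" using l0 l_def by simp
  have l2: "l^2 = p^2+q^2" using l by simp
  have "pbar u x ^2 + qbar u x ^2 = (p^2+q^2)/l^2"
    by (simp add: pbar_def qbar_def p_def q_def l_def power_divide add_divide_distrib)
  also have "\<dots> = l^2/l^2" using l2 by simp
  also have "\<dots> = 1" using l0 by simp
  finally show "pbar u x ^2 + qbar u x ^2 = 1" .
  have "p*(v$1/x$1) + q * v$3 + (G$2*x$1)*(v$2/x$1 - v$3) = G \<bullet> v"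
    unfolding p q using x0 by (simp add: inner_vec_def sum_3 field_simps)
  then have "p*(v$1/x$1) + q * v$3 + (G$2*x$1)*(v$2/x$1 - v$3) = 0" using tang by simp
  then have "(p*(v$1/x$1) + q * v$3 + (G$2*x$1)*(v$2/x$1 - v$3))/l = 0" by simp
  then show "pbar u x * (v$1/x$1) + qbar u x * v$3 + (G$2*x$1)/lu u x * (v$2/x$1 - v$3) = 0"
    unfolding pbar_def qbar_def p_def[symmetric] q_def[symmetric] l_def[symmetric]
    by (simp add: add_divide_distrib mult.commute)
qed

theorem lemma3p6:
  fixes u :: "real^3 \<Rightarrow> real" and \<Sigma> :: "(real^3) set"
    and \<gamma> :: "real \<Rightarrow> real^3" and a b t :: real
  assumes surf: "regular_surface u \<Sigma>"
    and ab: "a < b"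
    and curve: "regular_curve \<gamma> a b"
    and on_surf: "\<gamma> ` {a..b} \<subseteq> \<Sigma>"
    and t: "t \<in> {a..b}"
    and nonchar: "noncharacteristic u (\<gamma> t)"
  defines "dg \<equiv> (\<lambda>s. vector_derivative \<gamma> (at s within {a..b}))"
    and "w \<equiv> (\<lambda>s. omega (\<gamma> s) (vector_derivative \<gamma> (at s within {a..b})))"
    and "pb \<equiv> pbar u (\<gamma> t)"
    and "qb \<equiv> qbar u (\<gamma> t)"
  shows
    "(w t \<noteq> 0 \<longrightarrow>
        ((\<lambda>L. geod_curv_s L u \<gamma> a b t) \<longlongrightarrow>
           (pb * dg t $ 1 + qb * dg t $ 2) / (\<gamma> t $ 1 * \<bar>w t\<bar>)) at_top)
     \<and> (w t = 0 \<and> vector_derivative w (at t within {a..b}) = 0 \<longrightarrow>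
        ((\<lambda>L. geod_curv_s L u \<gamma> a b t) \<longlongrightarrow> 0) at_top)
     \<and> (w t = 0 \<and> vector_derivative w (at t within {a..b}) \<noteq> 0 \<longrightarrow>
        ((\<lambda>L. geod_curv_s L u \<gamma> a b t / sqrt L) \<longlongrightarrow>
           ((- qb * (dg t $ 1 / \<gamma> t $ 1) + pb * dg t $ 3) * vector_derivative w (at t within {a..b}))
           / \<bar>qb * (dg t $ 1 / \<gamma> t $ 1) - pb * dg t $ 3\<bar> ^ 3) at_top)"
  proof -
  have C2: "C2_on AffG u" and sig: "\<Sigma> \<subseteq> AffG" "\<Sigma> = {x \<in> AffG. u x = 0}"
    using surf unfolding regular_surface_def by auto
  obtain f' where f': "\<And>x. x \<in> AffG \<Longrightarrow> (u has_derivative (\<lambda>h. f' x \<bullet> h)) (at x)"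
    using C2 unfolding C2_on_def by blast
  obtain \<gamma>' \<gamma>'' where g1: "\<And>s. s \<in> {a..b} \<Longrightarrow> (\<gamma> has_vector_derivative \<gamma>' s) (at s within {a..b})"
    and g2: "\<And>s. s \<in> {a..b} \<Longrightarrow> (\<gamma>' has_vector_derivative \<gamma>'' s) (at s within {a..b})"
    using curve unfolding regular_curve_def C2_curve_def by blast
  define x where "x = \<gamma> t"
  define v where "v = \<gamma>' t"
  define acc where "acc = \<gamma>'' t"
  define G where "G = f' x"
  have xS: "x \<in> \<Sigma>" using on_surf t x_def by blast
  have xA: "x \<in> AffG" using xS sig by blast
  have x1: "x$1 > 0" using xA by (simp add: AffG_def)
  have Gd: "frechet_derivative u (at x) = (\<lambda>h. G \<bullet> h)"
    using frechet_derivative_at[OF f'[OF xA]] G_def by simp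
  have dgs: "dg s = \<gamma>' s" if "s \<in> {a..b}" for s
    unfolding dg_def by (rule vector_derivative_within_closed_interval[OF ab that g1[OF that]])
  have dgt: "dg t = v" using dgs[OF t] v_def by simp
  have dgt': "vector_derivative \<gamma> (at t within {a..b}) = v" using dgt unfolding dg_def .
  have acct: "vector_derivative dg (at t within {a..b}) = acc"
  proof -
    have "(dg has_vector_derivative \<gamma>'' t) (at t within {a..b})"
      by (rule has_vector_derivative_transform[OF t _ g2[OF t]]) (simp add: dgs)
    then show ?thesis unfolding acc_def by (rule vector_derivative_within_closed_interval[OF ab t])
  qed
  have tang: "G \<bullet> v = 0"
  proof -
    have d1: "((\<lambda>s. u (\<gamma> s)) has_derivative (\<lambda>h. G \<bullet> (h *\<^sub>R v))) (at t within {a..b})"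
      using has_derivative_compose[OF g1[OF t, unfolded has_vector_derivative_def] f'[OF xA[unfolded x_def]]]
      unfolding G_def x_def v_def .
    have z: "u (\<gamma> s) = 0" if "s \<in> {a..b}" for s
      using on_surf that sig by blast
    have d2: "((\<lambda>s. u (\<gamma> s)) has_derivative (\<lambda>h. 0)) (at t within {a..b})"
      by (rule has_derivative_transform[OF t _ has_derivative_const]) (simp add: z)
    have "(\<lambda>h. G \<bullet> (h *\<^sub>R v)) = (\<lambda>h::real. 0)"
      using frechet_derivative_unique_within_closed_interval[of a b t, unfolded cbox_interval, OF _ t d1 d2] ab
      by simp
    then show ?thesis by (metis scaleR_one)
  qed
  have nc: "lu u x \<noteq> 0" using nonchar unfolding noncharacteristic_def x_def .
  note pf = point_facts[OF x1 Gd tang nc]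
  define \<alpha> where "\<alpha> = v$1/x$1"
  define \<beta> where "\<beta> = v$3"
  define c where "c = v$2/x$1 - v$3"
  define R where "R = G$2*x$1"
  define l where "l = lu u x"
  define A0 where "A0 = acc$1/x$1 - \<alpha>^2"
  define B0 where "B0 = acc$3"
  define CC where "CC = acc$2/x$1 - acc$3 - \<alpha>*(2*c + \<beta>)"
  have lpos: "l > 0" using pf(3) l_def by simp
  have geq: "geod_curv_s L u \<gamma> a b t = Kf pb qb R l \<alpha> \<beta> c A0 B0 CC L" if "L > 0" for L
  proof -
    have "geod_curv_s L u \<gamma> a b t
       = gL L x (projT L u x (cov_acc L x v acc)) (JL L u x v) / normL L x v ^ 3"
      unfolding geod_curv_s_def Let_def x_def[symmetric] dg_def[symmetric] acct dgt' ..
    also have "\<dots> = Kf pb qb R l \<alpha> \<beta> c A0 B0 CC L"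
      unfolding curv_formula[OF x1 that Gd tang nc] pb_def qb_def x_def[symmetric] R_def l_def
        \<alpha>_def \<beta>_def c_def A0_def B0_def CC_def ..
    finally show ?thesis .
  qed
  have ev: "eventually (\<lambda>L. Kf pb qb R l \<alpha> \<beta> c A0 B0 CC L = geod_curv_s L u \<gamma> a b t) at_top"
    using eventually_gt_at_top[of 0] by eventually_elim (simp add: geq)
  have wt: "w t = c"
    unfolding w_def omega_def om_def x_def[symmetric] dgt' c_def
    by (simp add: inner_vec_def sum_3)
  have part1: "w t \<noteq> 0 \<longrightarrow>
        ((\<lambda>L. geod_curv_s L u \<gamma> a b t) \<longlongrightarrow>
           (pb * dg t $ 1 + qb * dg t $ 2) / (\<gamma> t $ 1 * \<bar>w t\<bar>)) at_top"
  proof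
    assume "w t \<noteq> 0"
    then have c0: "c \<noteq> 0" using wt by simp
    have eq: "(pb*\<alpha> + qb*(c+\<beta>))/\<bar>c\<bar> = (pb * dg t $ 1 + qb * dg t $ 2) / (\<gamma> t $ 1 * \<bar>w t\<bar>)"
    proof -
      have e1: "pb*\<alpha> + qb*(c+\<beta>) = (pb * v$1 + qb * v$2)/x$1"
        unfolding \<alpha>_def \<beta>_def c_def using x1 by (simp add: field_simps)
      show ?thesis unfolding wt dgt x_def[symmetric] e1 by simp
    qed
    show "((\<lambda>L. geod_curv_s L u \<gamma> a b t) \<longlongrightarrow>
           (pb * dg t $ 1 + qb * dg t $ 2) / (\<gamma> t $ 1 * \<bar>w t\<bar>)) at_top"
      using Lim_transform_eventually[OF lim_i[OF lpos c0] ev] unfolding eq .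
  qed
  have pbx: "pb = pbar u x" unfolding pb_def x_def ..
  have qbx: "qb = qbar u x" unfolding qb_def x_def ..
  have pq1: "pb^2 + qb^2 = 1" using pf(1) unfolding pbx qbx .
  have tg: "pb*\<alpha> + qb*\<beta> + R/l*c = 0" using pf(2) unfolding pbx qbx \<alpha>_def \<beta>_def c_def R_def l_def .
  have wd: "vector_derivative w (at t within {a..b}) = acc$2/x$1 - v$2 * v$1/(x$1)^2 - acc$3"
  proof -
    have ws: "w s = \<gamma>' s $ 2 / \<gamma> s $ 1 - \<gamma>' s $ 3" if "s \<in> {a..b}" for s
      using dgs[OF that] unfolding w_def omega_def om_def dg_def by (simp add: inner_vec_def sum_3)
    have d1: "((\<lambda>s. \<gamma> s $ 1) has_real_derivative v $ 1) (at t within {a..b})"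
      using vd_comp[OF g1[OF t]] unfolding v_def .
    have d2: "((\<lambda>s. \<gamma>' s $ 2) has_real_derivative acc $ 2) (at t within {a..b})"
      using vd_comp[OF g2[OF t]] unfolding acc_def .
    have d3: "((\<lambda>s. \<gamma>' s $ 3) has_real_derivative acc $ 3) (at t within {a..b})"
      using vd_comp[OF g2[OF t]] unfolding acc_def .
    have xt: "\<gamma> t $ 1 = x $ 1" "\<gamma>' t $ 2 = v $ 2" unfolding x_def v_def by simp_all
    have "((\<lambda>s. \<gamma>' s $ 2 / \<gamma> s $ 1 - \<gamma>' s $ 3) has_real_derivative
        (acc$2 * x$1 - v$2 * v$1)/(x$1 * x$1) - acc$3) (at t within {a..b})"
      using x1 by (auto intro!: derivative_eq_intros d1 d2 d3 simp: xt)
    then have "(w has_real_derivative (acc$2 * x$1 - v$2 * v$1)/(x$1 * x$1) - acc$3) (at t within {a..b})"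
      using has_field_derivative_transform_within[OF _ zero_less_one t, of _ _ w] ws by simp
    then have "vector_derivative w (at t within {a..b}) = (acc$2 * x$1 - v$2 * v$1)/(x$1 * x$1) - acc$3"
      unfolding has_real_derivative_iff_has_vector_derivative
      by (rule vector_derivative_within_closed_interval[OF ab t])
    then show ?thesis using x1 by (simp add: field_simps power2_eq_square)
  qed
  have CCw: "c = 0 \<Longrightarrow> CC = vector_derivative w (at t within {a..b})"
  proof -
    assume c0: "c = 0"
    then have "v$2 = x$1 * v$3" unfolding c_def using x1 by (simp add: field_simps)
    then show ?thesis unfolding wd CC_def c0 \<alpha>_def \<beta>_def using x1 by (simp add: field_simps power2_eq_square)
  qed
  have part2: "w t = 0 \<and> vector_derivative w (at t within {a..b}) = 0 \<longrightarrow>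
        ((\<lambda>L. geod_curv_s L u \<gamma> a b t) \<longlongrightarrow> 0) at_top"
  proof
    assume h: "w t = 0 \<and> vector_derivative w (at t within {a..b}) = 0"
    then have c0: "c = 0" using wt by simp
    have C0: "CC = 0" using CCw[OF c0] h by simp
    show "((\<lambda>L. geod_curv_s L u \<gamma> a b t) \<longlongrightarrow> 0) at_top"
      using Lim_transform_eventually[OF lim_ii[OF lpos] ev[unfolded c0 C0]] .
  qed
  have part3: "w t = 0 \<and> vector_derivative w (at t within {a..b}) \<noteq> 0 \<longrightarrow>
        ((\<lambda>L. geod_curv_s L u \<gamma> a b t / sqrt L) \<longlongrightarrow>
           ((- qb * (dg t $ 1 / \<gamma> t $ 1) + pb * dg t $ 3) * vector_derivative w (at t within {a..b}))
           / \<bar>qb * (dg t $ 1 / \<gamma> t $ 1) - pb * dg t $ 3\<bar> ^ 3) at_top"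
  proof
    assume h: "w t = 0 \<and> vector_derivative w (at t within {a..b}) \<noteq> 0"
    then have c0: "c = 0" using wt by simp
    have Cw: "vector_derivative w (at t within {a..b}) = CC" using CCw[OF c0] by simp
    have pq0: "pb*\<alpha> + qb*\<beta> = 0" using tg c0 by simp
    have "\<alpha>^2+\<beta>^2 = (pb^2+qb^2)*(\<alpha>^2+\<beta>^2)" using pq1 by simp
    also have "\<dots> = (qb*\<alpha>-pb*\<beta>)^2 + (pb*\<alpha> + qb*\<beta>)^2" by (simp add: algebra_simps power2_eq_square)
    also have "\<dots> = (qb*\<alpha>-pb*\<beta>)^2" using pq0 by simp
    finally have ab2: "sqrt(\<alpha>^2+\<beta>^2) = \<bar>qb*\<alpha>-pb*\<beta>\<bar>" by simp
    have val: "- CC*(qb*\<alpha>-pb*\<beta>)/sqrt(\<alpha>^2+\<beta>^2)^3 =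
       ((- qb * (dg t $ 1 / \<gamma> t $ 1) + pb * dg t $ 3) * vector_derivative w (at t within {a..b}))
           / \<bar>qb * (dg t $ 1 / \<gamma> t $ 1) - pb * dg t $ 3\<bar> ^ 3"
      unfolding ab2 Cw dgt x_def[symmetric] \<alpha>_def[symmetric] \<beta>_def[symmetric] by (simp add: algebra_simps)
    have ev2: "eventually (\<lambda>L. Kf pb qb R l \<alpha> \<beta> 0 A0 B0 CC L / sqrt L = geod_curv_s L u \<gamma> a b t / sqrt L) at_top"
      using ev[unfolded c0] by eventually_elim simp
    show "((\<lambda>L. geod_curv_s L u \<gamma> a b t / sqrt L) \<longlongrightarrow>
           ((- qb * (dg t $ 1 / \<gamma> t $ 1) + pb * dg t $ 3) * vector_derivative w (at t within {a..b}))
           / \<bar>qb * (dg t $ 1 / \<gamma> t $ 1) - pb * dg t $ 3\<bar> ^ 3) at_top"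
      using Lim_transform_eventually[OF lim_iii[OF lpos] ev2] unfolding val .
  qed
  show ?thesis using part1 part2 part3 by blast
qed

end
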